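(* Let $\kappa>0$, $u_0>0$, and let $u$ be the solution of $\frac{d}{dr}\big(u'/\sqrt{1+u'^2}\big)=\kappa u$, $u(0)=u_0$, $u'(0)=0$. Let $a>0$ and $0\le\gamma<\pi/2$ be such that $u$ is defined on $[0,a)$ and $\sin\psi(a)=\cos\gamma$, where $\sin\psi=u'/\sqrt{1+u'^2}$ (extended continuously to $r=a$). Then $$u(a)<\frac{\cos\gamma}{\kappa a}-\frac a2\tan\gamma+\frac a{2\cos^2\gamma}\Big(\frac\pi2-\gamma\Big).$$
   Context: $u$ is the profile of a $\kappa$-cylindrical capillary surface $z=u(x)$ between vertical plates $x=\pm a$ with contact angle $\gamma$; $u(a)$ is the outer height. *)

theory Defs
  imports "HOL-Analysis.Analysis"
begin

end

theory Submission
  imports Defs "HOL-Analysis.Analysis"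
begin

lemma wfacts:
  fixes t :: real
  defines "w \<equiv> t / sqrt (1 + t\<^sup>2)"
  shows "\<bar>w\<bar> < 1" "sqrt (1 - w\<^sup>2) = 1 / sqrt (1 + t\<^sup>2)" "t = w / sqrt (1 - w\<^sup>2)"
    "w > 0 \<longleftrightarrow> t > 0"
proof -
  have q: "sqrt (1 + t\<^sup>2) > 0" by (simp add: add_pos_nonneg)
  have qq: "(sqrt (1 + t\<^sup>2))\<^sup>2 = 1 + t\<^sup>2" by (simp add: add_nonneg_nonneg)
  have "\<bar>t\<bar> < sqrt (1 + t\<^sup>2)" by (rule real_less_rsqrt) simp
  then show "\<bar>w\<bar> < 1" using q by (simp add: w_def abs_div)
  have e: "1 - w\<^sup>2 = 1 / (1 + t\<^sup>2)"
  proof -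
    have "1 + t\<^sup>2 > 0" by (simp add: add_pos_nonneg)
    then show ?thesis unfolding w_def power_divide qq by (simp add: field_simps)
  qed
  show s: "sqrt (1 - w\<^sup>2) = 1 / sqrt (1 + t\<^sup>2)" unfolding e by (simp add: real_sqrt_divide)
  have "w / sqrt (1 - w\<^sup>2) = w * sqrt (1 + t\<^sup>2)" using s q by simp
  then show "t = w / sqrt (1 - w\<^sup>2)" using q by (simp add: w_def)
  show "w > 0 \<longleftrightarrow> t > 0" using q by (simp add: w_def divide_pos_pos zero_less_divide_iff)
qed

lemma Phi_deriv:
  fixes x :: real
  assumes "-1 < x" "x < 1"
  shows "((\<lambda>x. arcsin x - x * sqrt (1 - x\<^sup>2)) has_real_derivative 2 * x\<^sup>2 / sqrt (1 - x\<^sup>2)) (at x)"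
proof -
  have p: "1 - x\<^sup>2 > 0" using assms by (simp add: abs_square_less_1 abs_less_iff)
  have sp: "sqrt (1 - x\<^sup>2) > 0" using p by simp
  have ss: "sqrt (1 - x\<^sup>2) * sqrt (1 - x\<^sup>2) = 1 - x\<^sup>2" using p by simp
  show ?thesis
    using assms p sp ss
    by (auto intro!: derivative_eq_intros simp: field_simps power2_eq_square)
qed

theorem mainTheorem11:
  fixes \<kappa> u0 a \<gamma> :: real and u u' :: "real \<Rightarrow> real"
  assumes "\<kappa> > 0" and "u0 > 0" and "a > 0"
    and "0 \<le> \<gamma>" and "\<gamma> < pi / 2"
    and "u 0 = u0" and "u' 0 = 0"
    and "\<And>r. r \<in> {0..<a} \<Longrightarrow> (u has_real_derivative u' r) (at r within {0..<a})"
    and "\<And>r. r \<in> {0..<a} \<Longrightarrow>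
           ((\<lambda>s. u' s / sqrt (1 + (u' s)\<^sup>2)) has_real_derivative \<kappa> * u r) (at r within {0..<a})"
    and "((\<lambda>s. u' s / sqrt (1 + (u' s)\<^sup>2)) \<longlongrightarrow> cos \<gamma>) (at_left a)"
  shows "\<exists>L. (u \<longlongrightarrow> L) (at_left a) \<and>
           L < cos \<gamma> / (\<kappa> * a) - a / 2 * tan \<gamma> + a / (2 * (cos \<gamma>)\<^sup>2) * (pi / 2 - \<gamma>)"
proof -
  note k = assms(1) and u0 = assms(2) and a = assms(3) and g0 = assms(4) and g1 = assms(5)
  define S where "S = {0..<a}"
  define w where "w = (\<lambda>s. u' s / sqrt (1 + (u' s)\<^sup>2))"
  define c where "c = cos \<gamma>"
  have du: "\<And>r. r \<in> S \<Longrightarrow> (u has_real_derivative u' r) (at r within S)"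
    using assms(8) S_def by auto
  have dw: "\<And>r. r \<in> S \<Longrightarrow> (w has_real_derivative \<kappa> * u r) (at r within S)"
    using assms(9) S_def w_def by auto
  have wlim: "(w \<longlongrightarrow> c) (at_left a)" using assms(10) w_def c_def by simp
  have w0: "w 0 = 0" using assms(7) w_def by simp
  have wb: "\<And>s. \<bar>w s\<bar> < 1" unfolding w_def by (rule wfacts)
  have u'w: "\<And>s. u' s = w s / sqrt (1 - (w s)\<^sup>2)" unfolding w_def by (rule wfacts)
  have wpos_iff: "\<And>s. w s > 0 \<longleftrightarrow> u' s > 0" unfolding w_def by (rule wfacts)
  have c0: "c > 0" unfolding c_def using g0 g1 by (intro cos_gt_zero_pi) auto
  have c1: "c \<le> 1" unfolding c_def by simp
  have cu: "continuous_on S u" using du by (rule DERIV_continuous_on)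
  have cw: "continuous_on S w" using dw by (rule DERIV_continuous_on)
  have intS: "\<And>r. 0 < r \<Longrightarrow> r < a \<Longrightarrow> at r within S = at r"
    unfolding S_def by (rule at_within_interior) auto
  have duI: "\<And>r. 0 < r \<Longrightarrow> r < a \<Longrightarrow> DERIV u r :> u' r"
    using du intS S_def by fastforce
  have dwI: "\<And>r. 0 < r \<Longrightarrow> r < a \<Longrightarrow> DERIV w r :> \<kappa> * u r"
    using dw intS S_def by fastforce
  have "\<exists>C. \<forall>x\<in>S. \<kappa> * (u x)\<^sup>2 / 2 + sqrt (1 - (w x)\<^sup>2) = C"
  proof (rule has_field_derivative_zero_constant)
    show "convex S" unfolding S_def by (rule convex_real_interval)
    fix x assume x: "x \<in> S"
    have p: "1 - (w x)\<^sup>2 > 0" using wb[of x] by (simp add: abs_square_less_1)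
    have sp: "sqrt (1 - (w x)\<^sup>2) > 0" using p by simp
    have "((\<lambda>x. \<kappa> * (u x)\<^sup>2 / 2 + sqrt (1 - (w x)\<^sup>2)) has_field_derivative
        (\<kappa> * u x * u' x - w x * (\<kappa> * u x) / sqrt (1 - (w x)\<^sup>2))) (at x within S)"
      using du[OF x] dw[OF x] p sp
      by (auto intro!: derivative_eq_intros simp: field_simps)
    then show "((\<lambda>x. \<kappa> * (u x)\<^sup>2 / 2 + sqrt (1 - (w x)\<^sup>2)) has_field_derivative 0) (at x within S)"
      using u'w[of x] by simp
  qed
  then obtain C where C: "\<And>x. x \<in> S \<Longrightarrow> \<kappa> * (u x)\<^sup>2 / 2 + sqrt (1 - (w x)\<^sup>2) = C" by blast
  have "0 \<in> S" using a S_def by simp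
  from C[OF this] have C0: "C = \<kappa> * u0\<^sup>2 / 2 + 1" using w0 assms(6) by simp
  have energy: "\<And>x. x \<in> S \<Longrightarrow> (u x)\<^sup>2 = u0\<^sup>2 + 2 * (1 - sqrt (1 - (w x)\<^sup>2)) / \<kappa>"
  proof -
    fix x assume "x \<in> S"
    from C[OF this] C0 have "\<kappa> * (u x)\<^sup>2 = \<kappa> * u0\<^sup>2 + 2 * (1 - sqrt (1 - (w x)\<^sup>2))" by simp
    then show "(u x)\<^sup>2 = u0\<^sup>2 + 2 * (1 - sqrt (1 - (w x)\<^sup>2)) / \<kappa>" using k
      by (simp add: field_simps)
  qed
  have sq1: "\<And>x. sqrt (1 - (w x)\<^sup>2) \<le> 1" by simp
  have upos: "\<And>x. x \<in> S \<Longrightarrow> u x > 0"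
  proof (rule ccontr)
    fix x assume x: "x \<in> S" and "\<not> u x > 0"
    then have "u x \<le> 0" by simp
    moreover have "0 \<le> u 0" using assms(6) u0 by simp
    moreover have "0 \<le> x" using x S_def by simp
    moreover have "continuous_on {0..x} u" using cu x S_def
      by (auto intro: continuous_on_subset)
    ultimately obtain z where z: "0 \<le> z" "z \<le> x" "u z = 0" using IVT2'[of u x 0 0] by blast
    then have "z \<in> S" using x S_def by simp
    from energy[OF this] z(3) have "0 = u0\<^sup>2 + 2 * (1 - sqrt (1 - (w z)\<^sup>2)) / \<kappa>" by simp
    moreover have "2 * (1 - sqrt (1 - (w z)\<^sup>2)) / \<kappa> \<ge> 0" using sq1[of z] k by simp
    moreover have "u0\<^sup>2 > 0" using u0 by simp
    ultimately show False by linarith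
  qed
  have uform: "\<And>x. x \<in> S \<Longrightarrow> u x = sqrt (u0\<^sup>2 + 2 * (1 - sqrt (1 - (w x)\<^sup>2)) / \<kappa>)"
    using energy upos by (metis less_eq_real_def real_sqrt_unique)
  have wpos: "\<And>x. 0 < x \<Longrightarrow> x < a \<Longrightarrow> w x > 0"
  proof -
    fix x assume x: "0 < x" "x < a"
    have "w 0 < w x"
    proof (rule DERIV_pos_imp_increasing_open[OF x(1)])
      fix y assume "0 < y" "y < x"
      then show "\<exists>z. DERIV w y :> z \<and> z > 0"
        using dwI[of y] upos[of y] k x S_def by (intro exI[of _ "\<kappa> * u y"]) auto
    next
      show "continuous_on {0..x} w" using cw x S_def by (auto intro: continuous_on_subset)
    qed
    then show "w x > 0" using w0 by simp
  qed
  have u'pos: "\<And>x. 0 < x \<Longrightarrow> x < a \<Longrightarrow> u' x > 0" using wpos wpos_iff by blast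
  have umono: "\<And>s t. 0 \<le> s \<Longrightarrow> s < t \<Longrightarrow> t < a \<Longrightarrow> u s < u t"
  proof -
    fix s t :: real assume st: "0 \<le> s" "s < t" "t < a"
    show "u s < u t"
    proof (rule DERIV_pos_imp_increasing_open[OF st(2)])
      fix y assume "s < y" "y < t"
      then show "\<exists>z. DERIV u y :> z \<and> z > 0"
        using duI[of y] u'pos[of y] st by (intro exI[of _ "u' y"]) auto
    next
      show "continuous_on {s..t} u" using cu st S_def by (auto intro: continuous_on_subset)
    qed
  qed
  have cwI: "\<And>p q. 0 \<le> p \<Longrightarrow> q < a \<Longrightarrow> continuous_on {p..q} w"
    using cw S_def by (auto intro: continuous_on_subset)
  have difw: "\<And>x. 0 < x \<Longrightarrow> x < a \<Longrightarrow> w differentiable (at x)"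
    using dwI real_differentiable_def by blast
  have wquot: "\<And>r t. 0 < r \<Longrightarrow> r < t \<Longrightarrow> t < a \<Longrightarrow> w r / r < w t / t"
  proof -
    fix r t :: real assume rt: "0 < r" "r < t" "t < a"
    have "\<exists>l z. r < z \<and> z < t \<and> DERIV w z :> l \<and> w t - w r = (t - r) * l"
      by (rule MVT) (use rt difw cwI in auto)
    then obtain l1 z1 where z1: "r < z1" "z1 < t" "DERIV w z1 :> l1" "w t - w r = (t - r) * l1"
      by blast
    have l1: "l1 = \<kappa> * u z1" using DERIV_unique[OF z1(3) dwI[of z1]] z1 rt by simp
    have "\<exists>l z. 0 < z \<and> z < r \<and> DERIV w z :> l \<and> w r - w 0 = (r - 0) * l"
      by (rule MVT) (use rt difw cwI in auto)
    then obtain l2 z2 where z2: "0 < z2" "z2 < r" "DERIV w z2 :> l2" "w r - w 0 = (r - 0) * l2"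
      by blast
    have l2: "l2 = \<kappa> * u z2" using DERIV_unique[OF z2(3) dwI[of z2]] z2 rt by simp
    have "u z2 < u z1" using umono[of z2 z1] z1 z2 rt by simp
    then have AB: "l2 < l1" using l1 l2 k by simp
    have wr: "w r = r * l2" using z2(4) w0 by simp
    have wt: "w t = r * l2 + (t - r) * l1" using z1(4) wr by simp
    have "(t - r) * l2 < (t - r) * l1" using AB rt by simp
    then have "l2 * t < w t" using wt by (simp add: algebra_simps)
    then have "l2 < w t / t" using rt by (simp add: pos_less_divide_eq)
    moreover have "w r / r = l2" using wr rt by simp
    ultimately show "w r / r < w t / t" by simp
  qed
  have wlt: "\<And>r. 0 < r \<Longrightarrow> r < a \<Longrightarrow> w r < r * c / a"
  proof -
    fix r assume r: "0 < r" "r < a"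
    define t where "t = (r + a) / 2"
    have t: "r < t" "t < a" using r t_def by auto
    have lim: "((\<lambda>s. w s / s) \<longlongrightarrow> c / a) (at_left a)"
      using a by (intro tendsto_divide wlim tendsto_ident_at) auto
    have ev: "eventually (\<lambda>s. w t / t \<le> w s / s) (at_left a)"
      using eventually_at_left_real[OF t(2)]
      by eventually_elim (use wquot r t in \<open>auto intro: less_imp_le\<close>)
    have "w t / t \<le> c / a" by (rule tendsto_lowerbound[OF lim ev]) simp
    with wquot[OF r(1) t] have "w r / r < c / a" by simp
    then show "w r < r * c / a" using r by (simp add: pos_divide_less_eq field_simps)
  qed
  define P where "P = (\<lambda>x::real. arcsin x - x * sqrt (1 - x\<^sup>2))"
  define \<Phi> where "\<Phi> = (\<lambda>r. (a / c)\<^sup>2 / 2 * P (r * c / a))"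
  define G where "G = (\<lambda>r. r * u r - w r / \<kappa> - \<Phi> r)"
  have xb: "\<And>x. x \<in> {0..a} \<Longrightarrow> 0 \<le> x * c / a \<and> x * c / a \<le> 1"
  proof -
    fix x assume x: "x \<in> {0..a}"
    have "x * c \<le> a * 1" using x c0 c1 by (intro mult_mono) auto
    then show "0 \<le> x * c / a \<and> x * c / a \<le> 1" using x a c0 by (simp add: pos_divide_le_eq)
  qed
  have cPhi: "continuous_on {0..a} \<Phi>"
    unfolding \<Phi>_def P_def
    using a by (intro continuous_intros) (auto dest!: xb simp del: atLeastAtMost_iff)
  have cG: "continuous_on S G"
    unfolding G_def using k
    by (intro continuous_intros cu cw continuous_on_subset[OF cPhi]) (auto simp: S_def)
  have dG: "\<And>r. 0 < r \<Longrightarrow> r < a \<Longrightarrow> \<exists>y. DERIV G r :> y \<and> y < 0"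
  proof -
    fix r assume r: "0 < r" "r < a"
    define x where "x = r * c / a"
    have x0: "0 < x" using r c0 a x_def by simp
    have "r * c \<le> r" using r c1 by (simp add: mult_left_le)
    then have "r * c < a" using r by linarith
    then have x1: "x < 1" using a x_def by (simp add: pos_divide_less_eq)
    have dP: "DERIV P x :> 2 * x\<^sup>2 / sqrt (1 - x\<^sup>2)"
      unfolding P_def by (rule Phi_deriv) (use x0 x1 in auto)
    have dlin: "((\<lambda>r. r * c / a) has_real_derivative c / a) (at r)"
      using a by (auto intro!: derivative_eq_intros)
    have "DERIV (\<lambda>r. P (r * c / a)) r :> 2 * x\<^sup>2 / sqrt (1 - x\<^sup>2) * (c / a)"
      using DERIV_chain2[OF dP[unfolded x_def] dlin] x_def by simp
    then have dPhi: "DERIV \<Phi> r :> (a / c)\<^sup>2 / 2 * (2 * x\<^sup>2 / sqrt (1 - x\<^sup>2) * (c / a))"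
      unfolding \<Phi>_def by (rule DERIV_cmult)
    have Pe: "(a / c)\<^sup>2 / 2 * (2 * x\<^sup>2 / sqrt (1 - x\<^sup>2) * (c / a)) = r * (x / sqrt (1 - x\<^sup>2))"
    proof -
      have sx: "0 < sqrt (1 - x\<^sup>2)" using x0 x1 by (simp add: abs_square_less_1)
      have ac: "a / c * x = r" using x_def a c0 by simp
      have "(a / c)\<^sup>2 / 2 * (2 * x\<^sup>2 / sqrt (1 - x\<^sup>2) * (c / a)) = (a / c * x) * (x / sqrt (1 - x\<^sup>2))"
        using a c0 sx by (simp add: field_simps power2_eq_square)
      then show ?thesis by (simp only: ac)
    qed
    have sx: "0 < sqrt (1 - x\<^sup>2)" using x0 x1 by (simp add: abs_square_less_1)
    have dG: "DERIV G r :> (u r + r * u' r) - \<kappa> * u r / \<kappa> - r * (x / sqrt (1 - x\<^sup>2))"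
    proof -
      have d1: "DERIV (\<lambda>r. r * u r) r :> r * u' r + 1 * u r"
        by (rule DERIV_mult'[OF DERIV_ident duI]) (use r in auto)
      have d2: "DERIV (\<lambda>r. w r / \<kappa>) r :> \<kappa> * u r / \<kappa>"
        by (rule DERIV_cdivide[OF dwI]) (use r in auto)
      have "DERIV G r :> (r * u' r + 1 * u r) - \<kappa> * u r / \<kappa> - (a / c)\<^sup>2 / 2 * (2 * x\<^sup>2 / sqrt (1 - x\<^sup>2) * (c / a))"
        unfolding G_def by (rule DERIV_diff[OF DERIV_diff[OF d1 d2] dPhi])
      then show ?thesis unfolding Pe by (simp add: algebra_simps)
    qed
    have wr: "0 < w r" "w r < x" using wpos wlt r x_def by auto
    have "(w r)\<^sup>2 < x\<^sup>2" using wr by (simp add: power_strict_mono)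
    then have sq: "sqrt (1 - x\<^sup>2) < sqrt (1 - (w r)\<^sup>2)" by simp
    have "w r / sqrt (1 - (w r)\<^sup>2) < x / sqrt (1 - x\<^sup>2)"
      by (rule frac_less) (use wr sq sx in auto)
    then have "u' r < x / sqrt (1 - x\<^sup>2)" using u'w[of r] by simp
    then have "r * u' r < r * (x / sqrt (1 - x\<^sup>2))" by (rule mult_strict_left_mono) (use r in simp)
    then have "(u r + r * u' r) - \<kappa> * u r / \<kappa> - r * (x / sqrt (1 - x\<^sup>2)) < 0" using k by simp
    with dG show "\<exists>y. DERIV G r :> y \<and> y < 0" by blast
  qed
  have G0: "G 0 = 0" by (simp add: G_def \<Phi>_def P_def w0)
  have Gdec: "\<And>s t. 0 \<le> s \<Longrightarrow> s < t \<Longrightarrow> t < a \<Longrightarrow> G t < G s"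
  proof -
    fix s t :: real assume st: "0 \<le> s" "s < t" "t < a"
    show "G t < G s"
    proof (rule DERIV_neg_imp_decreasing_open[OF st(2)])
      fix y assume "s < y" "y < t"
      then show "\<exists>z. DERIV G y :> z \<and> z < 0" using dG st by auto
    next
      show "continuous_on {s..t} G" using cG st S_def by (auto intro: continuous_on_subset)
    qed
  qed
  define L where "L = sqrt (u0\<^sup>2 + 2 * (1 - sqrt (1 - c\<^sup>2)) / \<kappa>)"
  have uL: "(u \<longlongrightarrow> L) (at_left a)"
  proof -
    have "((\<lambda>s. sqrt (u0\<^sup>2 + 2 * (1 - sqrt (1 - (w s)\<^sup>2)) / \<kappa>)) \<longlongrightarrow> L) (at_left a)"
      unfolding L_def using k by (intro tendsto_intros wlim) auto
    moreover have "eventually (\<lambda>s. sqrt (u0\<^sup>2 + 2 * (1 - sqrt (1 - (w s)\<^sup>2)) / \<kappa>) = u s) (at_left a)"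
      using eventually_at_left_real[OF a]
      by eventually_elim (use uform S_def in auto)
    ultimately show ?thesis by (rule Lim_transform_eventually)
  qed
  have GL: "(G \<longlongrightarrow> a * L - c / \<kappa> - \<Phi> a) (at_left a)"
    unfolding G_def
    by (intro tendsto_diff tendsto_mult tendsto_divide tendsto_const tendsto_ident_at uL wlim
        continuous_on_Icc_at_leftD[OF cPhi a]) (use k in auto)
  have "a * L - c / \<kappa> - \<Phi> a \<le> G (a/2)"
  proof (rule tendsto_upperbound[OF GL])
    have ha: "a/2 < a" using a by simp
    show "eventually (\<lambda>s. G s \<le> G (a/2)) (at_left a)"
      using eventually_at_left_real[OF ha]
      by eventually_elim (use Gdec[of "a/2"] in \<open>auto intro: less_imp_le\<close>)
  qed simp
  moreover have "G (a/2) < 0" using Gdec[of 0 "a/2"] G0 a by simp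
  ultimately have key: "a * L < c / \<kappa> + \<Phi> a" by simp
  have sg: "sin \<gamma> \<ge> 0" using g0 g1 by (intro sin_ge_zero) auto
  have as: "arcsin c = pi / 2 - \<gamma>"
  proof -
    have "sin (pi/2 - \<gamma>) = cos \<gamma>" by (simp add: sin_diff)
    then have "arcsin c = arcsin (sin (pi/2 - \<gamma>))" by (simp add: c_def)
    also have "\<dots> = pi/2 - \<gamma>" by (rule arcsin_sin) (use g0 g1 in auto)
    finally show ?thesis .
  qed
  have sq: "sqrt (1 - c\<^sup>2) = sin \<gamma>"
    unfolding c_def using sg by (simp add: sin_squared_eq[symmetric])
  have Pa: "\<Phi> a = (a / c)\<^sup>2 / 2 * ((pi / 2 - \<gamma>) - c * sin \<gamma>)"
    unfolding \<Phi>_def P_def using a as sq by simp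
  have eq: "c / \<kappa> + \<Phi> a = a * (c / (\<kappa> * a) - a / 2 * tan \<gamma> + a / (2 * c\<^sup>2) * (pi / 2 - \<gamma>))"
    unfolding Pa tan_def c_def[symmetric] using a c0 k by (simp add: field_simps power2_eq_square)
  have "a * L < a * (c / (\<kappa> * a) - a / 2 * tan \<gamma> + a / (2 * c\<^sup>2) * (pi / 2 - \<gamma>))"
    using key eq by simp
  then have "L < cos \<gamma> / (\<kappa> * a) - a / 2 * tan \<gamma> + a / (2 * (cos \<gamma>)\<^sup>2) * (pi / 2 - \<gamma>)"
    using a c_def by simp
  with uL show ?thesis by blast
qed
end
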